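(* Let $X$ be a one- or two-sided subshift with $\mathcal L(X)=\mathcal L(\tilde X)$, and let $w=w_0w_1\dots w_n$ be a block in $\mathcal L(X)$. Then there exists a unique path $\alpha_0\to\alpha_1\to\dots\to\alpha_n$ in the HB diagram of $X$ with $\alpha_0=w_0$ and $\hat\pi(\alpha_0\alpha_1\dots\alpha_n)=w$.
   Context: Let $\mathcal A$ be a finite alphabet and $\sigma$ the shift, $(\sigma x)_i=x_{i+1}$. A one-sided subshift is a nonempty closed $\sigma$-invariant $X^+\subseteq\mathcal A^{\mathbb N}$; its natural extension is $\tilde X=\{x\in\mathcal A^{\mathbb Z}: x_px_{p+1}\dots\in X^+ \text{ for all } p\in\mathbb Z\}$. For a two-sided subshift $X\subseteq\mathcal A^{\mathbb Z}$, $X^+$ is the set of right rays $x_0x_1\dots$ of points of $X$, so $\tilde X=X$. $\mathcal L(Y)$ denotes the set of finite blocks occurring in points of $Y$. For $a_{-n}\dots a_0\in\mathcal L(\tilde X)$, $\mathrm{fol}(a_{-n}\dots a_0)=\{b_0b_1\dots\in X^+:\exists b\in\tilde X \text{ with } b_{-n}\dots b_0=a_{-n}\dots a_0\}$. A block $a_{-n}\dots a_0\in\mathcal L(\tilde X)$ with $n\ge1$ is significant if $\mathrm{fol}(a_{-n}\dots a_0)\subsetneq\mathrm{fol}(a_{-n+1}\dots a_0)$; single symbols in $\mathcal L(\tilde X)$ are also counted as significant. $\mathrm{sig}(a_{-n}\dots a_0)$ is the longest significant suffix. The HB diagram has vertex set the significant blocks of $\tilde X$ and an arrow $\alpha\to\beta$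 iff there is a symbol $b$ with $\alpha b\in\mathcal L(\tilde X)$ and $\beta=\mathrm{sig}(\alpha b)$. For a finite path $\alpha_0\to\dots\to\alpha_n$, $\hat\pi(\alpha_0\dots\alpha_n)=a_0\dots a_n$ where $a_i$ is the last symbol of $\alpha_i$. *)

theory Defs
  imports "HOL-Analysis.Analysis" "HOL-Library.Sublist"
begin

definition shift1 :: "(nat \<Rightarrow> 'a) \<Rightarrow> (nat \<Rightarrow> 'a)" where
  "shift1 x = (\<lambda>i. x (Suc i))"

definition shift2 :: "(int \<Rightarrow> 'a) \<Rightarrow> (int \<Rightarrow> 'a)" where
  "shift2 x = (\<lambda>i. x (i + 1))"

definition one_sided_subshift :: "(nat \<Rightarrow> 'a::finite) set \<Rightarrow> bool" where
  "one_sided_subshift X \<longleftrightarrow> X \<noteq> {}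
     \<and> closedin (product_topology (\<lambda>_::nat. discrete_topology (UNIV::'a set)) UNIV) X
     \<and> shift1 ` X \<subseteq> X"

definition two_sided_subshift :: "(int \<Rightarrow> 'a::finite) set \<Rightarrow> bool" where
  "two_sided_subshift X \<longleftrightarrow> X \<noteq> {}
     \<and> closedin (product_topology (\<lambda>_::int. discrete_topology (UNIV::'a set)) UNIV) X
     \<and> shift2 ` X = X"

definition nat_ext :: "(nat \<Rightarrow> 'a) set \<Rightarrow> (int \<Rightarrow> 'a) set" where
  "nat_ext Xp = {x. \<forall>p::int. (\<lambda>i::nat. x (p + int i)) \<in> Xp}"

definition rays :: "(int \<Rightarrow> 'a) set \<Rightarrow> (nat \<Rightarrow> 'a) set" where
  "rays X = (\<lambda>x. \<lambda>i::nat. x (int i)) ` X"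

definition lang1 :: "(nat \<Rightarrow> 'a) set \<Rightarrow> 'a list set" where
  "lang1 X = {w. \<exists>x\<in>X. \<exists>p::nat. w = map (\<lambda>i. x (p + i)) [0..<length w]}"

definition lang2 :: "(int \<Rightarrow> 'a) set \<Rightarrow> 'a list set" where
  "lang2 X = {w. \<exists>x\<in>X. \<exists>p::int. w = map (\<lambda>i. x (p + int i)) [0..<length w]}"

text \<open>Here Xp plays the role of X^+ and Xt the role of the natural extension.
  A block a_{-n} ... a_0 is the list w of length n+1 with w!k = a_{k-n}.\<close>

definition fol :: "(nat \<Rightarrow> 'a) set \<Rightarrow> (int \<Rightarrow> 'a) set \<Rightarrow> 'a list \<Rightarrow> (nat \<Rightarrow> 'a) set" where
  "fol Xp Xt w = {y \<in> Xp. \<exists>b\<in>Xt.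
      (\<forall>k<length w. b (int k - int (length w - 1)) = w ! k) \<and> y = (\<lambda>i. b (int i))}"

definition significant :: "(nat \<Rightarrow> 'a) set \<Rightarrow> (int \<Rightarrow> 'a) set \<Rightarrow> 'a list \<Rightarrow> bool" where
  "significant Xp Xt w \<longleftrightarrow> w \<in> lang2 Xt \<and>
     (length w = 1 \<or> (length w \<ge> 2 \<and> fol Xp Xt w \<subset> fol Xp Xt (tl w)))"

definition sig :: "(nat \<Rightarrow> 'a) set \<Rightarrow> (int \<Rightarrow> 'a) set \<Rightarrow> 'a list \<Rightarrow> 'a list" where
  "sig Xp Xt w = (THE v. suffix v w \<and> significant Xp Xt v \<and>
       (\<forall>u. suffix u w \<and> significant Xp Xt u \<longrightarrow> length u \<le> length v))"

definition hb_edge :: "(nat \<Rightarrow> 'a) set \<Rightarrow> (int \<Rightarrow> 'a) set \<Rightarrow> 'a list \<Rightarrow> 'a list \<Rightarrow> bool" where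
  "hb_edge Xp Xt \<alpha> \<beta> \<longleftrightarrow> significant Xp Xt \<alpha> \<and> significant Xp Xt \<beta> \<and>
     (\<exists>b. \<alpha> @ [b] \<in> lang2 Xt \<and> \<beta> = sig Xp Xt (\<alpha> @ [b]))"

definition hb_path :: "(nat \<Rightarrow> 'a) set \<Rightarrow> (int \<Rightarrow> 'a) set \<Rightarrow> 'a list list \<Rightarrow> bool" where
  "hb_path Xp Xt as \<longleftrightarrow> as \<noteq> [] \<and> (\<forall>i<length as. significant Xp Xt (as ! i)) \<and>
     (\<forall>i. Suc i < length as \<longrightarrow> hb_edge Xp Xt (as ! i) (as ! Suc i))"

definition pi_hat :: "'a list list \<Rightarrow> 'a list" where
  "pi_hat as = map last as"

end

theory Submission
  imports Defs
begin

lemma suffix_drop_eq: "suffix u v \<Longrightarrow> u = drop (length v - length u) v"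
  unfolding suffix_def by (elim exE) simp

lemma map_eq_iff: "(w = map f [0..<length w]) = (\<forall>i<length w. w ! i = f i)"
proof
  assume h: "w = map f [0..<length w]"
  show "\<forall>i<length w. w ! i = f i"
  proof (intro allI impI)
    fix i assume "i < length w"
    then have "map f [0..<length w] ! i = f i" by simp
    then show "w ! i = f i" using h by metis
  qed
next
  assume "\<forall>i<length w. w ! i = f i"
  then show "w = map f [0..<length w]" by (intro nth_equalityI) simp_all
qed

lemma lang2_nth: "w \<in> lang2 X \<longleftrightarrow> (\<exists>x\<in>X. \<exists>p::int. \<forall>i<length w. w ! i = x (p + int i))"
  unfolding lang2_def by (simp add: map_eq_iff)

lemma lang2_infix:
  assumes "ps @ v @ ss \<in> lang2 X" shows "v \<in> lang2 X"
proof -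
  from assms obtain x p where x: "x \<in> X" and h: "\<forall>i<length (ps @ v @ ss). (ps @ v @ ss) ! i = x (p + int i)"
    unfolding lang2_nth by blast
  have "\<forall>i<length v. v ! i = x ((p + int (length ps)) + int i)"
  proof (intro allI impI)
    fix i assume "i < length v"
    have a: "(ps @ v @ ss) ! (length ps + i) = x (p + int (length ps + i))"
      by (rule h[rule_format]) (use \<open>i < length v\<close> in simp)
    have e: "(ps @ v @ ss) ! (length ps + i) = v ! i" using \<open>i < length v\<close> by (simp add: nth_append)
    show "v ! i = x ((p + int (length ps)) + int i)" using a e
      by (simp add: algebra_simps)
  qed
  then show ?thesis using x unfolding lang2_nth by blast
qed

lemma lang2_suffix: "u \<in> lang2 X \<Longrightarrow> suffix v u \<Longrightarrow> v \<in> lang2 X"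
  unfolding suffix_def by (elim exE) (metis append_Nil2 lang2_infix)

lemma lang2_prefix: "u \<in> lang2 X \<Longrightarrow> prefix v u \<Longrightarrow> v \<in> lang2 X"
  unfolding prefix_def by (elim exE) (metis append_Nil lang2_infix)

lemma sig_props:
  assumes v: "v \<in> lang2 Xt" "v \<noteq> []"
  shows "suffix (sig Xp Xt v) v \<and> significant Xp Xt (sig Xp Xt v) \<and> sig Xp Xt v \<noteq> []"
proof -
  let ?P = "\<lambda>u. suffix u v \<and> significant Xp Xt u"
  have "suffix [last v] v" using v(2)
    by (metis append_butlast_last_id suffixI)
  moreover have "[last v] \<in> lang2 Xt" using lang2_suffix[OF v(1) calculation] .
  ultimately have P1: "?P [last v]" unfolding significant_def by simp
  have bnd: "\<forall>u. ?P u \<longrightarrow> length u < Suc (length v)"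
    by (auto dest: suffix_length_le)
  have "\<exists>m. ?P m \<and> (\<forall>u. ?P u \<longrightarrow> length u \<le> length m)"
    by (rule ex_has_greatest_nat[OF P1 bnd])
  then obtain m where m: "?P m" "\<forall>u. ?P u \<longrightarrow> length u \<le> length m"
    by blast
  have uniq: "\<And>u. ?P u \<and> (\<forall>u'. ?P u' \<longrightarrow> length u' \<le> length u) \<Longrightarrow> u = m"
  proof -
    fix u assume a: "?P u \<and> (\<forall>u'. ?P u' \<longrightarrow> length u' \<le> length u)"
    then have "length u = length m" using m by (meson le_antisym)
    note e = this
    have "u = drop (length v - length u) v" by (rule suffix_drop_eq) (use a in simp)
    also have "\<dots> = drop (length v - length m) v" by (simp only: e)
    also have "\<dots> = m" by (rule sym, rule suffix_drop_eq) (use m(1) in simp)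
    finally show "u = m" .
  qed
  have "sig Xp Xt v = m" unfolding sig_def
    by (rule the_equality) (use m uniq in auto)
  moreover have "m \<noteq> []" using m(1) unfolding significant_def by auto
  ultimately show ?thesis using m by simp
qed

lemma suffix_last: "suffix u v \<Longrightarrow> u \<noteq> [] \<Longrightarrow> last u = last v"
  unfolding suffix_def by (elim exE) simp

primrec alp :: "(nat \<Rightarrow> 'a) set \<Rightarrow> (int \<Rightarrow> 'a) set \<Rightarrow> 'a list \<Rightarrow> nat \<Rightarrow> 'a list" where
  "alp Xp Xt w 0 = [w ! 0]"
| "alp Xp Xt w (Suc i) = sig Xp Xt (alp Xp Xt w i @ [w ! Suc i])"

lemma alp_inv:
  assumes w: "w \<in> lang2 Xt" and i: "i < length w"
  shows "suffix (alp Xp Xt w i) (take (Suc i) w) \<and> significant Xp Xt (alp Xp Xt w i)"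
  using i
proof (induction i)
  case 0
  have t: "take 1 w = [w ! 0]" using 0 by (cases w) auto
  have "prefix [w ! 0] w" by (metis t take_is_prefix)
  then have "[w ! 0] \<in> lang2 Xt" using lang2_prefix w by blast
  then show ?case using t by (simp add: significant_def)
next
  case (Suc i)
  let ?a = "alp Xp Xt w i"
  from Suc have IH: "suffix ?a (take (Suc i) w)" "significant Xp Xt ?a" by auto
  have t: "take (Suc (Suc i)) w = take (Suc i) w @ [w ! Suc i]" using Suc.prems
    by (simp add: take_Suc_conv_app_nth)
  have s1: "suffix (?a @ [w ! Suc i]) (take (Suc (Suc i)) w)" using IH(1) t by simp
  have "prefix (take (Suc (Suc i)) w) w" by (rule take_is_prefix)
  then have "take (Suc (Suc i)) w \<in> lang2 Xt" using lang2_prefix w by blast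
  then have l: "?a @ [w ! Suc i] \<in> lang2 Xt" using lang2_suffix s1 by blast
  from sig_props[OF l, of Xp] have q1: "suffix (alp Xp Xt w (Suc i)) (?a @ [w ! Suc i])"
     and q2: "significant Xp Xt (alp Xp Xt w (Suc i))" by auto
  show ?case using suffix_order.order_trans[OF q1 s1] q2 by simp
qed

lemma alp_last:
  assumes w: "w \<in> lang2 Xt" and i: "i < length w"
  shows "last (alp Xp Xt w i) = w ! i"
proof -
  have "suffix (alp Xp Xt w i) (take (Suc i) w)" "significant Xp Xt (alp Xp Xt w i)"
    using alp_inv[OF w i] by auto
  moreover have "alp Xp Xt w i \<noteq> []" using calculation(2) unfolding significant_def by auto
  ultimately have "last (alp Xp Xt w i) = last (take (Suc i) w)" using suffix_last by blast
  also have "\<dots> = w ! i" using i by (simp add: take_Suc_conv_app_nth)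
  finally show ?thesis .
qed

theorem theorem5p8:
  fixes Xp :: "(nat \<Rightarrow> 'a::finite) set" and Xt :: "(int \<Rightarrow> 'a) set"
    and LX :: "'a list set" and w :: "'a list"
  assumes setting:
    "(one_sided_subshift Xp \<and> Xt = nat_ext Xp \<and> LX = lang1 Xp \<and> lang1 Xp = lang2 Xt)
     \<or> (two_sided_subshift Xt \<and> Xp = rays Xt \<and> LX = lang2 Xt)"
  assumes w: "w \<in> LX" "w \<noteq> []"
  shows "\<exists>!as. hb_path Xp Xt as \<and> length as = length w \<and> hd as = [w ! 0]
                \<and> pi_hat as = w"
proof -
  have wl: "w \<in> lang2 Xt" using setting w(1) by auto
  define as where "as = map (alp Xp Xt w) [0..<length w]"
  have len: "length as = length w" by (simp add: as_def)
  have nth: "\<And>i. i < length w \<Longrightarrow> as ! i = alp Xp Xt w i" by (simp add: as_def)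
  have path: "hb_path Xp Xt as"
    unfolding hb_path_def
  proof (intro conjI allI impI)
    show "as \<noteq> []" using w(2) len by auto
  next
    fix i assume "i < length as"
    then show "significant Xp Xt (as ! i)" using alp_inv[OF wl] nth len by auto
  next
    fix i assume si: "Suc i < length as"
    let ?a = "alp Xp Xt w i"
    have t: "take (Suc (Suc i)) w = take (Suc i) w @ [w ! Suc i]" using si len
      by (simp add: take_Suc_conv_app_nth)
    have IH: "suffix ?a (take (Suc i) w)" using alp_inv[OF wl, of i Xp] si len by simp
    have s1: "suffix (?a @ [w ! Suc i]) (take (Suc (Suc i)) w)"
      using IH t by simp
    have "prefix (take (Suc (Suc i)) w) w" by (rule take_is_prefix)
    then have "take (Suc (Suc i)) w \<in> lang2 Xt" using lang2_prefix wl by blast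
    then have l: "?a @ [w ! Suc i] \<in> lang2 Xt" using lang2_suffix s1 by blast
    show "hb_edge Xp Xt (as ! i) (as ! Suc i)"
      unfolding hb_edge_def using si len nth alp_inv[OF wl, of i Xp] alp_inv[OF wl, of "Suc i" Xp] l
      by auto
  qed
  have hd: "hd as = [w ! 0]" using w(2) nth[of 0] len
    by (metis alp.simps(1) hd_conv_nth length_greater_0_conv)
  have pi: "pi_hat as = w" unfolding pi_hat_def
    by (rule nth_equalityI) (use len nth alp_last[OF wl] in auto)
  show ?thesis
  proof (rule ex1I[of _ as])
    show "hb_path Xp Xt as \<and> length as = length w \<and> hd as = [w ! 0] \<and> pi_hat as = w"
      using path len hd pi by simp
  next
    fix bs assume b: "hb_path Xp Xt bs \<and> length bs = length w \<and> hd bs = [w ! 0] \<and> pi_hat bs = w"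
    have "\<forall>i. i < length w \<longrightarrow> bs ! i = alp Xp Xt w i"
    proof (intro allI)
      fix i show "i < length w \<longrightarrow> bs ! i = alp Xp Xt w i"
      proof (induction i)
        case 0
        have ne: "bs \<noteq> []" using b unfolding hb_path_def by simp
        show ?case using b hd_conv_nth[OF ne] by simp
      next
        case (Suc i)
        show ?case
        proof
          assume si: "Suc i < length w"
          then have IH: "bs ! i = alp Xp Xt w i" using Suc by simp
          have "hb_edge Xp Xt (bs ! i) (bs ! Suc i)" using b si unfolding hb_path_def by auto
          then obtain c where c: "bs ! i @ [c] \<in> lang2 Xt" "bs ! Suc i = sig Xp Xt (bs ! i @ [c])"
            unfolding hb_edge_def by auto
          have "suffix (bs ! Suc i) (bs ! i @ [c])" "bs ! Suc i \<noteq> []"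
            using sig_props[OF c(1), of Xp] c(2) by auto
          then have "last (bs ! Suc i) = last (bs ! i @ [c])" by (rule suffix_last)
          then have "last (bs ! Suc i) = c" by simp
          moreover have "last (bs ! Suc i) = w ! Suc i"
            using b si unfolding pi_hat_def by (metis length_map nth_map)
          ultimately have "c = w ! Suc i" by simp
          then show "bs ! Suc i = alp Xp Xt w (Suc i)" using c(2) IH by simp
        qed
      qed
    qed
    then show "bs = as" using b len nth by (intro nth_equalityI) simp_all
  qed
qed

end
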